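(* Let $K$ be a field, $\boldsymbol{\lambda}=(\lambda_1,\dots,\lambda_n)$ a vector of positive integers, and $\Lambda=\langle 1/\lambda_1,\dots,1/\lambda_n\rangle$ the additive submonoid of $\mathbb{Q}_{\ge}$ generated by $1/\lambda_1,\dots,1/\lambda_n$. If $I(\boldsymbol{\lambda})\subseteq K[x_1,\dots,x_n]$ is normal, then $\Lambda$ is quasinormal.
   Context: $I(\boldsymbol{\lambda})$ is the integral closure in $K[x_1,\dots,x_n]$ of $(x_1^{\lambda_1},\dots,x_n^{\lambda_n})$; an ideal is normal if all its positive powers are integrally closed. A submonoid $S$ of the nonnegative rationals $\mathbb{Q}_{\ge}$ is quasinormal if whenever $x\in S$ and $x\ge p$ for a positive integer $p$, there exist $y_1,\dots,y_p\in S$ with $y_i\ge1$ for all $i$ and $x=y_1+\cdots+y_p$. *)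

theory Defs
  imports Complex_Main "HOL-Library.Poly_Mapping"
begin

(* The polynomial ring K[x_i : i in 'n] is modelled as
  ('n \<Rightarrow>\<^sub>0 nat) \<Rightarrow>\<^sub>0 'k (monomials = exponent vectors, finitely supported
  coefficient maps); 'n is a finite index type with CARD('n) = n. *)

definition ideal_gen :: "'a::comm_ring_1 set \<Rightarrow> 'a set" where
  "ideal_gen S = {x. \<exists>F c. finite F \<and> F \<subseteq> S \<and> x = (\<Sum>s\<in>F. c s * s)}"

definition ideal_pow :: "'a::comm_ring_1 set \<Rightarrow> nat \<Rightarrow> 'a set" where
  "ideal_pow I k = ideal_gen {prod_list xs | xs. length xs = k \<and> set xs \<subseteq> I}"

definition integral_closure_ideal :: "'a::comm_ring_1 set \<Rightarrow> 'a set" where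
  "integral_closure_ideal I = {r. \<exists>m\<ge>1. \<exists>a. (\<forall>i\<in>{1..m}. a i \<in> ideal_pow I i) \<and>
       r ^ m + (\<Sum>i=1..m. a i * r ^ (m - i)) = 0}"

definition integrally_closed_ideal :: "'a::comm_ring_1 set \<Rightarrow> bool" where
  "integrally_closed_ideal I \<longleftrightarrow> integral_closure_ideal I = I"

definition normal_ideal :: "'a::comm_ring_1 set \<Rightarrow> bool" where
  "normal_ideal I \<longleftrightarrow> (\<forall>k\<ge>1. integrally_closed_ideal (ideal_pow I k))"

definition var_pow :: "'n \<Rightarrow> nat \<Rightarrow> ('n \<Rightarrow>\<^sub>0 nat) \<Rightarrow>\<^sub>0 'k::field" where
  "var_pow i e = Poly_Mapping.single (Poly_Mapping.single i e) 1"

definition I_lam :: "('n::finite \<Rightarrow> nat) \<Rightarrow> (('n \<Rightarrow>\<^sub>0 nat) \<Rightarrow>\<^sub>0 'k::field) set" where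
  "I_lam lam = integral_closure_ideal (ideal_gen (range (\<lambda>i. var_pow i (lam i))))"

definition Lambda_mon :: "('n::finite \<Rightarrow> nat) \<Rightarrow> rat set" where
  "Lambda_mon lam = {(\<Sum>i\<in>UNIV. of_nat (c i) / of_nat (lam i)) | c. True}"

definition quasinormal :: "rat set \<Rightarrow> bool" where
  "quasinormal S \<longleftrightarrow> (\<forall>x\<in>S. \<forall>p::nat. p \<ge> 1 \<and> x \<ge> of_nat p \<longrightarrow>
      (\<exists>ys. length ys = p \<and> set ys \<subseteq> S \<and> (\<forall>y\<in>set ys. y \<ge> 1) \<and> x = sum_list ys))"

end

theory Submission
  imports Defs
begin

lemma keys_ideal_gen:
  fixes S :: "('a::comm_monoid_add \<Rightarrow>\<^sub>0 'b::comm_ring_1) set"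
  assumes up: "\<And>a d. a \<in> V \<Longrightarrow> a + d \<in> V"
    and S: "\<And>s. s \<in> S \<Longrightarrow> Poly_Mapping.keys s \<subseteq> V"
    and x: "x \<in> ideal_gen S"
  shows "Poly_Mapping.keys x \<subseteq> V"
proof -
  from x obtain F c where F: "finite F" "F \<subseteq> S" and xe: "x = (\<Sum>s\<in>F. c s * s)"
    unfolding ideal_gen_def by blast
  have "Poly_Mapping.keys (c s * s) \<subseteq> V" if "s \<in> F" for s
  proof
    fix k assume "k \<in> Poly_Mapping.keys (c s * s)"
    then obtain a b where "k = a + b" "b \<in> Poly_Mapping.keys s"
      using keys_mult by blast
    moreover have "b \<in> V" using S F that \<open>b \<in> _\<close> by blast
    ultimately show "k \<in> V" using up[of b a] by (simp add: add.commute)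
  qed
  then show ?thesis using keys_sum[of "\<lambda>s. c s * s" F] xe by blast
qed

lemma keys_prod_list:
  fixes xs :: "('a::comm_monoid_add \<Rightarrow>\<^sub>0 'b::comm_ring_1) list"
  assumes U0: "0 \<in> U 0"
    and Uadd: "\<And>a b j k. a \<in> U j \<Longrightarrow> b \<in> U k \<Longrightarrow> a + b \<in> U (j + k)"
    and xs: "\<And>x. x \<in> set xs \<Longrightarrow> Poly_Mapping.keys x \<subseteq> U 1"
  shows "Poly_Mapping.keys (prod_list xs) \<subseteq> U (length xs)"
  using xs
proof (induction xs)
  case Nil
  then show ?case using U0 by simp
next
  case (Cons x xs)
  show ?case
  proof
    fix k assume "k \<in> Poly_Mapping.keys (prod_list (x # xs))"
    then obtain a b where "k = a + b" "a \<in> Poly_Mapping.keys x" "b \<in> Poly_Mapping.keys (prod_list xs)"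
      using keys_mult by fastforce
    moreover have "a \<in> U 1" using Cons.prems \<open>a \<in> _\<close> by auto
    moreover have "b \<in> U (length xs)" using Cons \<open>b \<in> _\<close> by auto
    ultimately show "k \<in> U (length (x # xs))" using Uadd[of a 1 b "length xs"] by simp
  qed
qed

lemma keys_ideal_pow:
  fixes I :: "('a::comm_monoid_add \<Rightarrow>\<^sub>0 'b::comm_ring_1) set"
  assumes U0: "0 \<in> U 0"
    and Uadd: "\<And>a b j k. a \<in> U j \<Longrightarrow> b \<in> U k \<Longrightarrow> a + b \<in> U (j + k)"
    and up: "\<And>a d. a \<in> U p \<Longrightarrow> a + d \<in> U p"
    and I: "\<And>x. x \<in> I \<Longrightarrow> Poly_Mapping.keys x \<subseteq> U 1"
    and x: "x \<in> ideal_pow I p"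
  shows "Poly_Mapping.keys x \<subseteq> U p"
proof -
  have "Poly_Mapping.keys s \<subseteq> U p" if "s \<in> {prod_list xs | xs. length xs = p \<and> set xs \<subseteq> I}" for s
  proof -
    from that obtain xs where "s = prod_list xs" "length xs = p" "set xs \<subseteq> I" by blast
    then show ?thesis using keys_prod_list[of U xs, OF U0 Uadd] I by blast
  qed
  then show ?thesis using keys_ideal_gen[of "U p", OF up] x unfolding ideal_pow_def by blast
qed

lemma low_mult:
  fixes f g :: "('a::comm_monoid_add \<Rightarrow>\<^sub>0 'b::comm_ring_1)"
  and \<kappa> :: "'a \<Rightarrow> 'c::linordered_cancel_ab_semigroup_add"
  assumes inj: "inj \<kappa>" and add: "\<And>x y. \<kappa> (x + y) = \<kappa> x + \<kappa> y"
  and a: "\<And>x. x \<in> Poly_Mapping.keys f \<Longrightarrow> \<kappa> a \<le> \<kappa> x"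
  and b: "\<And>y. y \<in> Poly_Mapping.keys g \<Longrightarrow> \<kappa> b \<le> \<kappa> y"
  shows "Poly_Mapping.lookup (f * g) (a + b) = Poly_Mapping.lookup f a * Poly_Mapping.lookup g b"
proof -
  define ca where "ca = Poly_Mapping.lookup f a"
  define cb where "cb = Poly_Mapping.lookup g b"
  define f' where "f' = f - Poly_Mapping.single a ca"
  define g' where "g' = g - Poly_Mapping.single b cb"
  have kf: "\<kappa> a < \<kappa> x" if "x \<in> Poly_Mapping.keys f'" for x
  proof -
    have "x \<noteq> a" using that by (auto simp: f'_def ca_def in_keys_iff lookup_minus)
    moreover have "x \<in> Poly_Mapping.keys f" using that
      by (auto simp: f'_def ca_def in_keys_iff lookup_minus lookup_single when_def split: if_splits)
    ultimately show ?thesis using a[of x] inj by (metis injD order_le_imp_less_or_eq)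
  qed
  have kg: "\<kappa> b < \<kappa> y" if "y \<in> Poly_Mapping.keys g'" for y
  proof -
    have "y \<noteq> b" using that by (auto simp: g'_def cb_def in_keys_iff lookup_minus)
    moreover have "y \<in> Poly_Mapping.keys g" using that
      by (auto simp: g'_def cb_def in_keys_iff lookup_minus lookup_single when_def split: if_splits)
    ultimately show ?thesis using b[of y] inj by (metis injD order_le_imp_less_or_eq)
  qed
  have fg: "f * g = Poly_Mapping.single (a + b) (ca * cb) + Poly_Mapping.single a ca * g' + f' * g"
    by (simp add: f'_def g'_def mult_single algebra_simps)
  have z1: "Poly_Mapping.lookup (Poly_Mapping.single a ca * g') (a + b) = 0"
  proof (rule ccontr)
    assume "Poly_Mapping.lookup (Poly_Mapping.single a ca * g') (a + b) \<noteq> 0"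
    then have "a + b \<in> Poly_Mapping.keys (Poly_Mapping.single a ca * g')" by (simp add: in_keys_iff)
    then obtain x y where "a + b = x + y" "x \<in> Poly_Mapping.keys (Poly_Mapping.single a ca)"
       "y \<in> Poly_Mapping.keys g'" using keys_mult by blast
    then have "x = a" by (auto split: if_splits)
    with \<open>a + b = x + y\<close> have "\<kappa> a + \<kappa> b = \<kappa> a + \<kappa> y" by (metis add)
    with kg[OF \<open>y \<in> _\<close>] show False by simp
  qed
  have z2: "Poly_Mapping.lookup (f' * g) (a + b) = 0"
  proof (rule ccontr)
    assume "Poly_Mapping.lookup (f' * g) (a + b) \<noteq> 0"
    then have "a + b \<in> Poly_Mapping.keys (f' * g)" by (simp add: in_keys_iff)
    then obtain x y where "a + b = x + y" "x \<in> Poly_Mapping.keys f'"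
       "y \<in> Poly_Mapping.keys g" using keys_mult by blast
    then have "\<kappa> a + \<kappa> b = \<kappa> x + \<kappa> y" by (metis add)
    moreover have "\<kappa> a + \<kappa> b < \<kappa> x + \<kappa> y"
      using kf[OF \<open>x \<in> _\<close>] b[OF \<open>y \<in> _\<close>] by (rule add_less_le_mono)
    ultimately show False by simp
  qed
  show ?thesis unfolding fg lookup_add z1 z2 by (simp add: ca_def cb_def)
qed

lemma low_keys_mult:
  fixes f g :: "('a::comm_monoid_add \<Rightarrow>\<^sub>0 'b::comm_ring_1)"
  and \<kappa> :: "'a \<Rightarrow> 'c::linordered_cancel_ab_semigroup_add"
  assumes add: "\<And>x y. \<kappa> (x + y) = \<kappa> x + \<kappa> y"
  and a: "\<And>x. x \<in> Poly_Mapping.keys f \<Longrightarrow> \<kappa> a \<le> \<kappa> x"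
  and b: "\<And>y. y \<in> Poly_Mapping.keys g \<Longrightarrow> \<kappa> b \<le> \<kappa> y"
  and k: "k \<in> Poly_Mapping.keys (f * g)"
  shows "\<kappa> (a + b) \<le> \<kappa> k"
proof -
  obtain x y where "k = x + y" "x \<in> Poly_Mapping.keys f" "y \<in> Poly_Mapping.keys g"
    using keys_mult k by blast
  then show ?thesis using a b add by (simp add: add_mono)
qed

lemma low_pow:
  fixes f :: "('a::comm_monoid_add \<Rightarrow>\<^sub>0 'b::comm_ring_1)"
  and \<kappa> :: "'a \<Rightarrow> 'c::linordered_cancel_ab_semigroup_add"
  and \<omega> :: "'a \<Rightarrow> nat"
  assumes inj: "inj \<kappa>" and add: "\<And>x y. \<kappa> (x + y) = \<kappa> x + \<kappa> y"
  and wadd: "\<And>x y. \<omega> (x + y) = \<omega> x + \<omega> y"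
  and a: "\<And>x. x \<in> Poly_Mapping.keys f \<Longrightarrow> \<kappa> a \<le> \<kappa> x"
  shows "\<exists>A. Poly_Mapping.lookup (f ^ m) A = (Poly_Mapping.lookup f a) ^ m \<and>
     (\<forall>x\<in>Poly_Mapping.keys (f ^ m). \<kappa> A \<le> \<kappa> x) \<and> \<omega> A = m * \<omega> a"
proof (induction m)
  case 0
  have "\<omega> 0 = 0" using wadd[of 0 0] by simp
  then show ?case by (intro exI[of _ 0]) simp
next
  case (Suc m)
  then obtain A where A: "Poly_Mapping.lookup (f ^ m) A = (Poly_Mapping.lookup f a) ^ m"
     "\<And>x. x\<in>Poly_Mapping.keys (f ^ m) \<Longrightarrow> \<kappa> A \<le> \<kappa> x" "\<omega> A = m * \<omega> a" by blast
  show ?case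
  proof (intro exI[of _ "a + A"] conjI ballI)
    show "Poly_Mapping.lookup (f ^ Suc m) (a + A) = Poly_Mapping.lookup f a ^ Suc m"
      using low_mult[of \<kappa> f a "f ^ m" A, OF inj add a A(2)] A(1) by simp
    show "\<kappa> (a + A) \<le> \<kappa> x" if "x \<in> Poly_Mapping.keys (f ^ Suc m)" for x
      using low_keys_mult[of \<kappa> f a "f ^ m" A x, OF add a A(2)] that by simp
    show "\<omega> (a + A) = Suc m * \<omega> a" using wadd A(3) by simp
  qed
qed

definition wt :: "('n::finite \<Rightarrow> nat) \<Rightarrow> ('n \<Rightarrow>\<^sub>0 nat) \<Rightarrow> nat" where
  "wt lam a = (\<Sum>i\<in>UNIV. Poly_Mapping.lookup a i * (prod lam UNIV div lam i))"

lemma wt_add: "wt lam (a + b) = wt lam a + wt lam b"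
  by (simp add: wt_def lookup_add algebra_simps sum.distrib)

lemma wt_single: "wt lam (Poly_Mapping.single i n) = n * (prod lam UNIV div lam i)"
proof -
  have "wt lam (Poly_Mapping.single i n) = (\<Sum>j\<in>UNIV. if i = j then n * (prod lam UNIV div lam j) else 0)"
    unfolding wt_def by (intro sum.cong) (auto simp: lookup_single when_def)
  then show ?thesis by simp
qed

lemma wt_var: assumes "lam i > 0" shows "wt lam (Poly_Mapping.single i (lam i)) = prod lam UNIV"
proof -
  have "lam i dvd prod lam UNIV" by (simp add: dvd_prodI)
  then show ?thesis using assms by (simp add: wt_single)
qed

lemma exists_order:
  fixes lam :: "'n::finite \<Rightarrow> nat"
  shows "\<exists>\<kappa> :: ('n \<Rightarrow>\<^sub>0 nat) \<Rightarrow> (nat \<Rightarrow>\<^sub>0 nat). inj \<kappa> \<and> (\<forall>x y. \<kappa> (x + y) = \<kappa> x + \<kappa> y)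
     \<and> (\<forall>a b. wt lam b < wt lam a \<longrightarrow> \<kappa> b < \<kappa> a)"
proof -
  obtain e :: "'n \<Rightarrow> nat" where e: "inj e"
    using finite_imp_inj_to_nat_seg[of "UNIV :: 'n set"] by auto
  define \<kappa> where "\<kappa> a = Poly_Mapping.single 0 (wt lam a) +
      (\<Sum>i\<in>UNIV. Poly_Mapping.single (Suc (e i)) (Poly_Mapping.lookup a i))" for a :: "'n \<Rightarrow>\<^sub>0 nat"
  have l0: "Poly_Mapping.lookup (\<kappa> a) 0 = wt lam a" for a
    by (simp add: \<kappa>_def lookup_add lookup_sum lookup_single when_def)
  have lS: "Poly_Mapping.lookup (\<kappa> a) (Suc (e j)) = Poly_Mapping.lookup a j" for a j
  proof -
    have "Poly_Mapping.lookup (\<kappa> a) (Suc (e j)) =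
       (\<Sum>i\<in>UNIV. Poly_Mapping.lookup (Poly_Mapping.single (Suc (e i)) (Poly_Mapping.lookup a i)) (Suc (e j)))"
      by (simp add: \<kappa>_def lookup_add lookup_sum lookup_single)
    also have "\<dots> = (\<Sum>i\<in>UNIV. if i = j then Poly_Mapping.lookup a i else 0)"
      by (intro sum.cong) (auto simp: lookup_single when_def e inj_eq)
    finally show ?thesis by simp
  qed
  have "inj \<kappa>"
  proof (rule injI)
    fix a b assume "\<kappa> a = \<kappa> b"
    then have "Poly_Mapping.lookup a j = Poly_Mapping.lookup b j" for j by (metis lS)
    then show "a = b" by (rule poly_mapping_eqI)
  qed
  moreover have "\<kappa> (x + y) = \<kappa> x + \<kappa> y" for x y
    by (simp add: \<kappa>_def wt_add single_add lookup_add sum.distrib algebra_simps)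
  moreover have "\<kappa> b < \<kappa> a" if "wt lam b < wt lam a" for a b
    unfolding less_poly_mapping.rep_eq less_fun_def
    by (rule exI[of _ 0]) (simp add: l0 that)
  ultimately show ?thesis by blast
qed

lemma keys_J:
  fixes lam :: "'n::finite \<Rightarrow> nat"
  assumes pos: "\<forall>i. lam i > 0"
  and x: "x \<in> ideal_pow (ideal_gen (range (\<lambda>i. var_pow i (lam i))) :: (('n \<Rightarrow>\<^sub>0 nat) \<Rightarrow>\<^sub>0 'k::field) set) j"
  shows "\<forall>k\<in>Poly_Mapping.keys x. j * prod lam UNIV \<le> wt lam k"
proof -
  let ?U = "\<lambda>j. {a. j * prod lam UNIV \<le> wt lam a}"
  have gen: "Poly_Mapping.keys s \<subseteq> ?U 1" if "s \<in> range (\<lambda>i. var_pow i (lam i) :: ('n \<Rightarrow>\<^sub>0 nat) \<Rightarrow>\<^sub>0 'k)" for s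
    using that pos by (auto simp: var_pow_def wt_var)
  have "Poly_Mapping.keys x \<subseteq> ?U j"
  proof (rule keys_ideal_pow[of ?U, OF _ _ _ _ x])
    show "0 \<in> ?U 0" by simp
    show "a + b \<in> ?U (j + k)" if "a \<in> ?U j" "b \<in> ?U k" for a b j k
      using that by (simp add: wt_add algebra_simps)
    show "a + d \<in> ?U j" if "a \<in> ?U j" for a d
      using that by (simp add: wt_add)
    show "Poly_Mapping.keys y \<subseteq> ?U 1" if "y \<in> ideal_gen (range (\<lambda>i. var_pow i (lam i) :: ('n \<Rightarrow>\<^sub>0 nat) \<Rightarrow>\<^sub>0 'k))" for y
      by (rule keys_ideal_gen[OF _ gen that]) (simp add: wt_add)
  qed
  then show ?thesis by auto
qed

lemma I_lam_keys:
  fixes lam :: "'n::finite \<Rightarrow> nat"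
  assumes pos: "\<forall>i. lam i > 0"
  and r: "r \<in> (I_lam lam :: (('n \<Rightarrow>\<^sub>0 nat) \<Rightarrow>\<^sub>0 'k::field) set)"
  shows "\<forall>k\<in>Poly_Mapping.keys r. prod lam UNIV \<le> wt lam k"
proof (rule ccontr)
  let ?L = "prod lam UNIV"
  let ?J = "ideal_gen (range (\<lambda>i. var_pow i (lam i))) :: (('n \<Rightarrow>\<^sub>0 nat) \<Rightarrow>\<^sub>0 'k) set"
  assume "\<not> ?thesis"
  then obtain k0 where k0: "k0 \<in> Poly_Mapping.keys r" "wt lam k0 < ?L" by auto
  obtain \<kappa> :: "('n \<Rightarrow>\<^sub>0 nat) \<Rightarrow> (nat \<Rightarrow>\<^sub>0 nat)" where inj: "inj \<kappa>"
    and add: "\<And>x y. \<kappa> (x+y) = \<kappa> x + \<kappa> y"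
    and ord: "\<And>a b. wt lam b < wt lam a \<Longrightarrow> \<kappa> b < \<kappa> a"
    using exists_order[of lam] by blast
  from r obtain M a where M: "M \<ge> 1" and a: "\<forall>i\<in>{1..M}. a i \<in> ideal_pow ?J i"
    and eq: "r ^ M + (\<Sum>i=1..M. a i * r ^ (M - i)) = 0"
    unfolding I_lam_def integral_closure_ideal_def by blast
  have fin: "finite (\<kappa> ` Poly_Mapping.keys r)" and ne: "\<kappa> ` Poly_Mapping.keys r \<noteq> {}" using k0 by auto
  obtain a0 where a0: "a0 \<in> Poly_Mapping.keys r" "\<kappa> a0 = Min (\<kappa> ` Poly_Mapping.keys r)"
    using Min_in[OF fin ne] by auto
  have a0min: "\<And>x. x \<in> Poly_Mapping.keys r \<Longrightarrow> \<kappa> a0 \<le> \<kappa> x" using a0(2) fin by simp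
  have w0: "wt lam a0 \<le> wt lam x" if "x \<in> Poly_Mapping.keys r" for x
    using ord[of x a0] a0min[OF that] by (meson leD not_le)
  have wl: "wt lam a0 < ?L" using w0[OF k0(1)] k0(2) by simp
  obtain A where A1: "Poly_Mapping.lookup (r ^ M) A = (Poly_Mapping.lookup r a0) ^ M"
    and A3: "wt lam A = M * wt lam a0"
    using low_pow[of \<kappa> "wt lam" r a0 M, OF inj add wt_add a0min] by blast
  have nz: "Poly_Mapping.lookup (r ^ M) A \<noteq> 0" using A1 a0(1) by (simp add: in_keys_iff)
  have zero: "Poly_Mapping.lookup (a i * r ^ (M - i)) A = 0" if i: "i \<in> {1..M}" for i
  proof (rule ccontr)
    assume "Poly_Mapping.lookup (a i * r ^ (M - i)) A \<noteq> 0"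
    then have "A \<in> Poly_Mapping.keys (a i * r ^ (M - i))" by (simp add: in_keys_iff)
    then obtain x y where xy: "A = x + y" "x \<in> Poly_Mapping.keys (a i)" "y \<in> Poly_Mapping.keys (r ^ (M - i))"
      using keys_mult by blast
    have h1: "i * ?L \<le> wt lam x" using keys_J[OF pos a[rule_format, OF i]] xy(2) by blast
    have h2: "(M - i) * wt lam a0 \<le> wt lam y"
    proof -
      let ?U = "\<lambda>j. {y. j * wt lam a0 \<le> wt lam y}"
      have "Poly_Mapping.keys (prod_list (replicate (M - i) r)) \<subseteq> ?U (length (replicate (M - i) r))"
        by (rule keys_prod_list) (auto simp: wt_add w0 add_mono algebra_simps)
      then show ?thesis using xy(3) by auto
    qed
    have "i * wt lam a0 < i * ?L" using wl i by simp
    moreover have "M * wt lam a0 = i * wt lam a0 + (M - i) * wt lam a0"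
      using i by (simp add: add_mult_distrib[symmetric])
    moreover have "wt lam A = wt lam x + wt lam y" using xy(1) wt_add by simp
    ultimately show False using h1 h2 A3 by linarith
  qed
  have "Poly_Mapping.lookup (r ^ M) A + Poly_Mapping.lookup (\<Sum>i=1..M. a i * r ^ (M - i)) A = 0"
    using arg_cong[OF eq, of "\<lambda>p. Poly_Mapping.lookup p A"] by (simp add: lookup_add)
  moreover have "Poly_Mapping.lookup (\<Sum>i=1..M. a i * r ^ (M - i)) A = 0"
    by (simp add: lookup_sum zero)
  ultimately show False using nz by simp
qed

lemma ideal_gen_zero: "0 \<in> ideal_gen S"
  unfolding ideal_gen_def by (rule CollectI, rule exI[of _ "{}"]) simp

lemma ideal_gen_mult: "s \<in> S \<Longrightarrow> c * s \<in> ideal_gen S"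
  unfolding ideal_gen_def by (rule CollectI, rule exI[of _ "{s}"], rule exI[of _ "\<lambda>_. c"]) simp

lemma prod_in_ideal_pow:
  assumes "set xs \<subseteq> I" "length xs \<ge> p"
  shows "prod_list xs \<in> ideal_pow I p"
proof -
  have "prod_list xs = prod_list (take p xs @ drop p xs)" by simp
  also have "\<dots> = prod_list (drop p xs) * prod_list (take p xs)"
    by (simp only: prod_list.append mult.commute)
  finally have e: "prod_list xs = prod_list (drop p xs) * prod_list (take p xs)" .
  have "set (take p xs) \<subseteq> I" using assms(1) by (meson in_set_takeD subset_iff)
  moreover have "length (take p xs) = p" using assms(2) by simp
  ultimately have "prod_list (take p xs) \<in> {prod_list xs | xs. length xs = p \<and> set xs \<subseteq> I}"
    by blast
  then show ?thesis unfolding ideal_pow_def e by (rule ideal_gen_mult)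
qed
lemma group_lemma:
  fixes ys :: "'a::comm_ring_1 list"
  assumes "set ys \<subseteq> I" "length ys \<ge> Suc k * p"
  shows "\<exists>zs. length zs = Suc k \<and> set zs \<subseteq> ideal_pow I p \<and> prod_list zs = prod_list ys"
  using assms
proof (induction k arbitrary: ys)
  case 0
  then show ?case by (intro exI[of _ "[prod_list ys]"]) (simp add: prod_in_ideal_pow)
next
  case (Suc k)
  have "set (drop p ys) \<subseteq> I" using Suc.prems(1) by (auto dest: in_set_dropD)
  moreover have "length (drop p ys) \<ge> Suc k * p" using Suc.prems(2) by simp
  ultimately obtain zs where zs: "length zs = Suc k" "set zs \<subseteq> ideal_pow I p"
     "prod_list zs = prod_list (drop p ys)" using Suc.IH by blast
  have t: "prod_list (take p ys) \<in> ideal_pow I p"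
    using Suc.prems by (intro prod_in_ideal_pow) (auto dest: in_set_takeD)
  show ?case
    by (rule exI[of _ "prod_list (take p ys) # zs"])
       (use zs t in \<open>auto simp flip: prod_list.append\<close>)
qed

lemma var_pow_in_I_lam: "(var_pow i (lam i) :: ('n::finite \<Rightarrow>\<^sub>0 nat) \<Rightarrow>\<^sub>0 'k::field) \<in> I_lam lam"
proof -
  let ?J = "ideal_gen (range (\<lambda>i. var_pow i (lam i))) :: (('n \<Rightarrow>\<^sub>0 nat) \<Rightarrow>\<^sub>0 'k) set"
  let ?r = "var_pow i (lam i) :: ('n \<Rightarrow>\<^sub>0 nat) \<Rightarrow>\<^sub>0 'k"
  have rJ: "?r \<in> ?J" using ideal_gen_mult[of ?r _ 1] by simp
  have "(- 1) * prod_list [?r] \<in> ideal_pow ?J 1"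
    unfolding ideal_pow_def by (rule ideal_gen_mult) (use rJ in \<open>auto intro!: exI[of _ "[?r]"]\<close>)
  then show ?thesis unfolding I_lam_def integral_closure_ideal_def
    by (intro CollectI exI[of _ 1] exI[of _ "\<lambda>_. - ?r"] conjI) simp_all
qed

lemma single_pow_sum:
  "(Poly_Mapping.single (\<Sum>i\<in>A. Poly_Mapping.single i (f i)) (1::'k::comm_ring_1)) ^ n =
    Poly_Mapping.single (\<Sum>i\<in>A. Poly_Mapping.single i (n * f i)) 1"
proof (induction n)
  case 0 then show ?case by simp
next
  case (Suc n)
  then show ?case by (simp add: mult_single sum.distrib[symmetric] single_add[symmetric])
qed

lemma var_pow_pow: "(var_pow i l :: ('n \<Rightarrow>\<^sub>0 nat) \<Rightarrow>\<^sub>0 'k::field) ^ n =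
   Poly_Mapping.single (Poly_Mapping.single i (n * l)) 1"
proof (induction n)
  case 0 then show ?case by simp
next
  case (Suc n)
  then show ?case by (simp add: var_pow_def mult_single single_add[symmetric])
qed

lemma prod_single:
  "finite A \<Longrightarrow> (\<Prod>i\<in>A. Poly_Mapping.single (h i) (1::'k::comm_ring_1)) = Poly_Mapping.single (\<Sum>i\<in>A. h i) 1"
  by (induction A rule: finite_induct) (simp_all add: mult_single)

definition Wq :: "('n::finite \<Rightarrow> nat) \<Rightarrow> ('n \<Rightarrow>\<^sub>0 nat) \<Rightarrow> rat" where
  "Wq lam a = (\<Sum>i\<in>UNIV. of_nat (Poly_Mapping.lookup a i) / of_nat (lam i))"

lemma Wq_add: "Wq lam (a + b) = Wq lam a + Wq lam b"
  by (simp add: Wq_def lookup_add add_divide_distrib sum.distrib)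

lemma Wq_in: "Wq lam a \<in> Lambda_mon lam"
  unfolding Wq_def Lambda_mon_def by blast

lemma Wq_nonneg: "0 \<le> Wq lam a"
  unfolding Wq_def by (intro sum_nonneg) simp

lemma Lambda_add:
  assumes "x \<in> Lambda_mon lam" "y \<in> Lambda_mon lam" shows "x + y \<in> Lambda_mon lam"
proof -
  obtain c d where "x = (\<Sum>i\<in>UNIV. of_nat (c i) / of_nat (lam i))"
    "y = (\<Sum>i\<in>UNIV. of_nat (d i) / of_nat (lam i))" using assms unfolding Lambda_mon_def by blast
  then have "x + y = (\<Sum>i\<in>UNIV. of_nat (c i + d i) / of_nat (lam i))"
    by (simp add: add_divide_distrib sum.distrib)
  then show ?thesis unfolding Lambda_mon_def by (intro CollectI exI[of _ "\<lambda>i. c i + d i"]) simp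
qed

lemma div_rat:
  fixes lam :: "'n::finite \<Rightarrow> nat"
  assumes pos: "\<forall>i. lam i > 0"
  shows "(of_nat (prod lam UNIV) / of_nat (lam i) :: rat) = of_nat (prod lam UNIV div lam i)"
proof -
  have d: "lam i dvd prod lam UNIV" by (rule dvd_prodI) simp_all
  have "prod lam UNIV = (prod lam UNIV div lam i) * lam i"
    by (simp add: dvd_div_mult_self[OF d])
  then have "(of_nat (prod lam UNIV) :: rat) = of_nat (prod lam UNIV div lam i) * of_nat (lam i)"
    by (metis of_nat_mult)
  then show ?thesis using pos by (simp add: field_simps)
qed

lemma Wq_wt:
  assumes pos: "\<forall>i. lam i > 0"
  shows "of_nat (prod lam UNIV) * Wq lam a = of_nat (wt lam a)"
proof -
  have "of_nat (prod lam UNIV) * Wq lam a =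
     (\<Sum>i\<in>UNIV. of_nat (Poly_Mapping.lookup a i) * (of_nat (prod lam UNIV) / of_nat (lam i)))"
    by (simp add: Wq_def sum_distrib_left ac_simps)
  also have "\<dots> = (\<Sum>i\<in>UNIV. of_nat (Poly_Mapping.lookup a i * (prod lam UNIV div lam i)))"
    using div_rat[OF pos] by simp
  also have "\<dots> = of_nat (wt lam a)" by (simp add: wt_def)
  finally show ?thesis .
qed

lemma prod_concat_rep:
  "prod_list (concat (map (\<lambda>i. replicate (n i) (g i)) es)) = prod_list (map (\<lambda>i. g i ^ n i) es)"
  by (induction es) simp_all

theorem lemma4p6:
  fixes lam :: "'n::finite \<Rightarrow> nat"
  assumes "\<forall>i. lam i > 0"
    and "normal_ideal (I_lam lam :: (('n \<Rightarrow>\<^sub>0 nat) \<Rightarrow>\<^sub>0 'k::field) set)"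
  shows "quasinormal (Lambda_mon lam)"
proof -
  note pos = assms(1)
  let ?L = "prod lam UNIV"
  let ?I = "I_lam lam :: (('n \<Rightarrow>\<^sub>0 nat) \<Rightarrow>\<^sub>0 'k) set"
  have Lpos: "?L > 0" using pos by (simp add: prod_pos)
  define U where "U j = {a. \<exists>ys. length ys = j \<and> set ys \<subseteq> Lambda_mon lam \<and> (\<forall>y\<in>set ys. 1 \<le> y)
       \<and> Wq lam a = sum_list ys}" for j
  have U0: "0 \<in> U 0" unfolding U_def by (simp add: Wq_def)
  have Uadd: "a + b \<in> U (j + k)" if A: "a \<in> U j" and B: "b \<in> U k" for a b j k
  proof -
    obtain ys1 where Y1: "length ys1 = j" "set ys1 \<subseteq> Lambda_mon lam" "\<forall>y\<in>set ys1. 1 \<le> y" "Wq lam a = sum_list ys1"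
      using A unfolding U_def mem_Collect_eq by blast
    obtain ys2 where "length ys2 = k" "set ys2 \<subseteq> Lambda_mon lam" "\<forall>y\<in>set ys2. 1 \<le> y" "Wq lam b = sum_list ys2"
      using B unfolding U_def mem_Collect_eq by blast
    then show ?thesis using Y1 unfolding U_def by (intro CollectI exI[of _ "ys1 @ ys2"]) (auto simp: Wq_add)
  qed
  have Uup: "a + d \<in> U j" if J: "1 \<le> j" and A: "a \<in> U j" for a d j
  proof -
    obtain ys where ys: "length ys = j" "set ys \<subseteq> Lambda_mon lam" "\<forall>y\<in>set ys. 1 \<le> y" "Wq lam a = sum_list ys"
      using A unfolding U_def mem_Collect_eq by blast
    then obtain y ys' where yy: "ys = y # ys'" using J by (cases ys) auto
    have "y + Wq lam d \<in> Lambda_mon lam" using ys yy by (intro Lambda_add Wq_in) auto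
    moreover have "1 \<le> y + Wq lam d" using ys yy Wq_nonneg[of lam d] by auto
    ultimately show ?thesis unfolding U_def using ys yy
      by (intro CollectI exI[of _ "(y + Wq lam d) # ys'"]) (auto simp: Wq_add)
  qed
  have UI: "Poly_Mapping.keys x \<subseteq> U 1" if "x \<in> ?I" for x
  proof
    fix k assume k: "k \<in> Poly_Mapping.keys x"
    have "?L \<le> wt lam k" using I_lam_keys[OF pos that] k by blast
    then have "(of_nat ?L :: rat) * 1 \<le> of_nat ?L * Wq lam k" using Wq_wt[OF pos, of k] by (simp del: of_nat_prod)
    then have "1 \<le> Wq lam k" using Lpos by (simp del: of_nat_prod)
    then show "k \<in> U 1" unfolding U_def using Wq_in[of lam k]
      by (intro CollectI exI[of _ "[Wq lam k]"]) auto
  qed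
  show ?thesis unfolding quasinormal_def
  proof (intro ballI allI impI)
    fix x p assume x: "x \<in> Lambda_mon lam" and p: "1 \<le> p \<and> of_nat p \<le> x"
    obtain c where xc: "x = (\<Sum>i\<in>UNIV. of_nat (c i) / of_nat (lam i))"
      using x unfolding Lambda_mon_def by blast
    define m where "m = (\<Sum>i\<in>UNIV. Poly_Mapping.single i (c i))"
    define X where "X = (Poly_Mapping.single m 1 :: ('n \<Rightarrow>\<^sub>0 nat) \<Rightarrow>\<^sub>0 'k)"
    have lm: "Poly_Mapping.lookup m j = c j" for j
    proof -
      have "Poly_Mapping.lookup m j = (\<Sum>i\<in>UNIV. if i = j then c i else 0)"
        unfolding m_def lookup_sum by (intro sum.cong) (auto simp: lookup_single when_def)
      then show ?thesis by simp
    qed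
    have Wm: "Wq lam m = x" by (simp add: Wq_def lm xc)
    have XL: "X \<in> integral_closure_ideal (ideal_pow ?I p)"
    proof -
      obtain es where es: "set es = (UNIV::'n set)" "distinct es"
        using finite_distinct_list[of "UNIV :: 'n set"] by auto
      define n where "n i = c i * (?L div lam i)" for i
      define ys where "ys = concat (map (\<lambda>i. replicate (n i) (var_pow i (lam i) :: ('n \<Rightarrow>\<^sub>0 nat) \<Rightarrow>\<^sub>0 'k)) es)"
      have ysI: "set ys \<subseteq> ?I" using var_pow_in_I_lam by (auto simp: ys_def)
      have len: "length ys = (\<Sum>i\<in>UNIV. n i)"
        by (simp add: ys_def length_concat o_def sum_list_distinct_conv_sum_set[OF es(2)] es(1))
      have "(of_nat (length ys) :: rat) = (\<Sum>i\<in>UNIV. of_nat (c i) * (of_nat ?L / of_nat (lam i)))"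
        by (simp add: len n_def div_rat[OF pos] del: of_nat_prod)
      also have "\<dots> = of_nat ?L * x" by (simp add: xc sum_distrib_left ac_simps del: of_nat_prod)
      finally have "(of_nat (length ys) :: rat) = of_nat ?L * x" .
      moreover have "(of_nat ?L :: rat) * of_nat p \<le> of_nat ?L * x"
        using p by (intro mult_left_mono) (auto simp del: of_nat_prod)
      ultimately have "(of_nat (?L * p) :: rat) \<le> of_nat (length ys)" by simp
      then have lenge: "Suc (?L - 1) * p \<le> length ys" using Lpos by (simp only: of_nat_le_iff) simp
      have "prod_list ys = prod_list (map (\<lambda>i. var_pow i (lam i) ^ n i) es)"
        by (simp add: ys_def prod_concat_rep)
      also have "\<dots> = (\<Prod>i\<in>set es. var_pow i (lam i) ^ n i)"
        by (rule prod.distinct_set_conv_list[OF es(2), symmetric])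
      also have "\<dots> = (\<Prod>i\<in>UNIV. var_pow i (lam i) ^ n i)" by (simp add: es(1))
      also have "\<dots> = (\<Prod>i\<in>UNIV. Poly_Mapping.single (Poly_Mapping.single i (?L * c i)) 1)"
      proof (rule prod.cong)
        fix i :: 'n
        have d: "lam i dvd ?L" by (rule dvd_prodI) simp_all
        have "n i * lam i = ?L * c i" using dvd_mult_div_cancel[OF d] by (simp add: n_def ac_simps)
        then show "var_pow i (lam i) ^ n i = (Poly_Mapping.single (Poly_Mapping.single i (?L * c i)) 1 :: ('n \<Rightarrow>\<^sub>0 nat) \<Rightarrow>\<^sub>0 'k)"
          by (simp add: var_pow_pow)
      qed simp
      also have "\<dots> = Poly_Mapping.single (\<Sum>i\<in>UNIV. Poly_Mapping.single i (?L * c i)) 1"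
        by (simp add: prod_single)
      also have "\<dots> = X ^ ?L" by (simp add: X_def m_def single_pow_sum)
      finally have pys: "prod_list ys = X ^ ?L" .
      obtain zs where zs: "length zs = Suc (?L - 1)" "set zs \<subseteq> ideal_pow ?I p" "prod_list zs = prod_list ys"
        using group_lemma[OF ysI lenge] by blast
      have "X ^ ?L \<in> {prod_list xs | xs. length xs = ?L \<and> set xs \<subseteq> ideal_pow ?I p}"
        using zs pys Lpos by (intro CollectI exI[of _ zs]) auto
      then have XLin: "(- 1) * X ^ ?L \<in> ideal_pow (ideal_pow ?I p) ?L"
        unfolding ideal_pow_def[of "ideal_pow ?I p"] by (rule ideal_gen_mult)
      define a where "a i = (if i = ?L then - (X ^ ?L) else 0)" for i
      have ain: "\<forall>i\<in>{1..?L}. a i \<in> ideal_pow (ideal_pow ?I p) i"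
        using XLin by (auto simp: a_def ideal_pow_def[of "ideal_pow ?I p"] ideal_gen_zero)
      have "(\<Sum>i=1..?L. a i * X ^ (?L - i)) = (\<Sum>i=1..?L. if i = ?L then - (X ^ ?L) else 0)"
        by (rule sum.cong) (auto simp: a_def)
      also have "\<dots> = - (X ^ ?L)" using Suc_leI[OF Lpos] by simp
      finally have "X ^ ?L + (\<Sum>i=1..?L. a i * X ^ (?L - i)) = 0" by simp
      then show ?thesis unfolding integral_closure_ideal_def using ain Suc_leI[OF Lpos]
        by (intro CollectI exI[of _ ?L] exI[of _ a] conjI) auto
    qed
    then have "X \<in> ideal_pow ?I p"
      using assms(2) p unfolding normal_ideal_def integrally_closed_ideal_def by blast
    then have "Poly_Mapping.keys X \<subseteq> U p"
      using keys_ideal_pow[where U = U and I = "?I", OF U0 Uadd Uup[OF conjunct1[OF p]] UI] by blast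
    then have "m \<in> U p" by (simp add: X_def)
    then show "\<exists>ys. length ys = p \<and> set ys \<subseteq> Lambda_mon lam \<and> (\<forall>y\<in>set ys. 1 \<le> y) \<and> x = sum_list ys"
      using Wm unfolding U_def by auto
  qed
qed

end
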